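(* Let $\alpha\in[0,1]$ be irrational, $n\geq 2$, and let $\alpha_n=\frac{p_n}{q_n}$ be the $n$-th rational approximant to $\alpha$. Then $v_{\alpha_n}(k)=v_\alpha(k)$ for all $-q_n+1\le k\le q_{n+1}-2$ if $n$ is even, and for all $-q_{n+1}-1\le k\le q_n-2$ if $n$ is odd; and $\widetilde v_{\alpha_n}(k)=\widetilde v_\alpha(k)$ for all $-q_{n+1}-1\le k\le q_n-2$ if $n$ is even, and for all $-q_n+1\le k\le q_{n+1}-2$ if $n$ is odd.
   Context: For $\beta\in[0,1]$: $v_\beta(k)=\chi_{[1-\beta,1)}(k\beta\bmod 1)$ and $\widetilde v_\beta(k)=\chi_{(1-\beta,1]\cup\{0\}}(k\beta\bmod 1)$, $k\in\mathbb{Z}$. Rational approximants: for $\alpha=[a_1,a_2,\dots]$ (continued fraction), $p_{-1}=1,p_0=0,p_n=a_np_{n-1}+p_{n-2}$, $q_{-1}=0,q_0=1,q_n=a_nq_{n-1}+q_{n-2}$, $\alpha_n=p_n/q_n$. *)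

theory Defs
  imports Complex_Main "HOL-Library.Indicator_Function"
begin

definition v_seq :: "real \<Rightarrow> int \<Rightarrow> real" where
  "v_seq \<beta> k = indicator {1 - \<beta> ..< 1} (frac (of_int k * \<beta>))"

definition vt_seq :: "real \<Rightarrow> int \<Rightarrow> real" where
  "vt_seq \<beta> k = indicator ({1 - \<beta> <.. 1} \<union> {0}) (frac (of_int k * \<beta>))"

text \<open>Continued fraction alpha = [a_1, a_2, ...] = 1/(a_1 + 1/(a_2 + ...)) via the Gauss map.
  cf_rem alpha m is the (m+1)-th complete remainder x_{m+1} in (0,1); cf_a alpha n = a_n for n >= 1.\<close>
definition cf_rem :: "real \<Rightarrow> nat \<Rightarrow> real" where
  "cf_rem \<alpha> m = ((\<lambda>x. frac (1 / x)) ^^ m) \<alpha>"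

definition cf_a :: "real \<Rightarrow> nat \<Rightarrow> int" where
  "cf_a \<alpha> n = \<lfloor>1 / cf_rem \<alpha> (n - 1)\<rfloor>"

fun cf_p :: "real \<Rightarrow> nat \<Rightarrow> int" where
  "cf_p \<alpha> 0 = 0"
| "cf_p \<alpha> (Suc 0) = 1"
| "cf_p \<alpha> (Suc (Suc n)) = cf_a \<alpha> (Suc (Suc n)) * cf_p \<alpha> (Suc n) + cf_p \<alpha> n"

fun cf_q :: "real \<Rightarrow> nat \<Rightarrow> int" where
  "cf_q \<alpha> 0 = 1"
| "cf_q \<alpha> (Suc 0) = cf_a \<alpha> 1"
| "cf_q \<alpha> (Suc (Suc n)) = cf_a \<alpha> (Suc (Suc n)) * cf_q \<alpha> (Suc n) + cf_q \<alpha> n"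

definition cf_approx :: "real \<Rightarrow> nat \<Rightarrow> real" where
  "cf_approx \<alpha> n = real_of_int (cf_p \<alpha> n) / real_of_int (cf_q \<alpha> n)"

end

theory Submission
  imports Defs
begin

lemma rem_Suc: "cf_rem \<alpha> (Suc m) = frac (1 / cf_rem \<alpha> m)"
  by (simp add: cf_rem_def)

lemma rem_props:
  assumes "\<alpha> \<in> {0..1}" "\<alpha> \<notin> \<rat>"
  shows "0 < cf_rem \<alpha> m \<and> cf_rem \<alpha> m < 1 \<and> cf_rem \<alpha> m \<notin> \<rat>"
proof (induction m)
  case 0
  have "\<alpha> \<noteq> 0" "\<alpha> \<noteq> 1" using assms(2) by auto
  then show ?case using assms by (simp add: cf_rem_def)
next
  case (Suc m)
  let ?x = "cf_rem \<alpha> m"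
  have "1 / ?x \<notin> \<rat>" using Suc.IH
    by (metis Rats_1 Rats_divide div_by_1 divide_divide_eq_right mult_1)
  then have nq: "frac (1 / ?x) \<notin> \<rat>" by (simp)
  then have "frac (1 / ?x) \<noteq> 0" by (metis Rats_0)
  then show ?case using nq frac_ge_0[of "1/?x"] frac_lt_1[of "1/?x"] by (simp add: rem_Suc)
qed

lemma a_Suc: "cf_a \<alpha> (Suc m) = \<lfloor>1 / cf_rem \<alpha> m\<rfloor>"
  by (simp add: cf_a_def)

lemma inv_rem:
  "1 / cf_rem \<alpha> m = of_int (cf_a \<alpha> (Suc m)) + cf_rem \<alpha> (Suc m)"
  by (simp add: a_Suc rem_Suc frac_def)

lemma a_ge1:
  assumes "\<alpha> \<in> {0..1}" "\<alpha> \<notin> \<rat>"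
  shows "cf_a \<alpha> (Suc m) \<ge> 1"
proof -
  have "0 < cf_rem \<alpha> m" "cf_rem \<alpha> m < 1" using rem_props[OF assms] by auto
  then have "1 / cf_rem \<alpha> m > 1" by simp
  then show ?thesis unfolding a_Suc by linarith
qed

lemma q_props:
  assumes "\<alpha> \<in> {0..1}" "\<alpha> \<notin> \<rat>"
  shows "cf_q \<alpha> m \<ge> 1 \<and> cf_q \<alpha> m \<le> cf_q \<alpha> (Suc m)"
proof (induction m)
  case 0
  then show ?case using a_ge1[OF assms, of 0] by simp
next
  case (Suc m)
  have "cf_a \<alpha> (Suc (Suc m)) \<ge> 1" using a_ge1[OF assms] by blast
  moreover have "cf_q \<alpha> (Suc m) \<ge> 1" using Suc.IH by linarith
  ultimately have "cf_a \<alpha> (Suc (Suc m)) * cf_q \<alpha> (Suc m) \<ge> 1 * cf_q \<alpha> (Suc m)"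
    by (intro mult_right_mono) auto
  moreover have "cf_q \<alpha> (Suc (Suc m)) = cf_a \<alpha> (Suc (Suc m)) * cf_q \<alpha> (Suc m) + cf_q \<alpha> m" by simp
  ultimately show ?case using Suc.IH by linarith
qed

lemma q_ge2:
  assumes "\<alpha> \<in> {0..1}" "\<alpha> \<notin> \<rat>"
  shows "cf_q \<alpha> (Suc (Suc m)) \<ge> 2"
proof -
  have "cf_a \<alpha> (Suc (Suc m)) \<ge> 1" using a_ge1[OF assms] by blast
  moreover have "cf_q \<alpha> (Suc m) \<ge> 1" "cf_q \<alpha> m \<ge> 1" using q_props[OF assms] by blast+
  ultimately have "cf_a \<alpha> (Suc (Suc m)) * cf_q \<alpha> (Suc m) \<ge> 1"
    using mult_mono[of 1 "cf_a \<alpha> (Suc (Suc m))" 1 "cf_q \<alpha> (Suc m)"] by simp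
  then show ?thesis using \<open>cf_q \<alpha> m \<ge> 1\<close> by simp
qed

lemma det: "cf_p \<alpha> (Suc n) * cf_q \<alpha> n - cf_p \<alpha> n * cf_q \<alpha> (Suc n) = (-1) ^ n"
proof (induction n)
  case 0
  then show ?case by simp
next
  case (Suc n)
  then show ?case by (simp add: algebra_simps)
qed

lemma ident:
  assumes "\<alpha> \<in> {0..1}" "\<alpha> \<notin> \<rat>"
  shows "\<alpha> * (cf_q \<alpha> (Suc m) + cf_q \<alpha> m * cf_rem \<alpha> (Suc m))
         = cf_p \<alpha> (Suc m) + cf_p \<alpha> m * cf_rem \<alpha> (Suc m)"
proof (induction m)
  case 0
  have "0 < cf_rem \<alpha> 0" using rem_props[OF assms] by blast
  moreover have "cf_rem \<alpha> 0 = \<alpha>" by (simp add: cf_rem_def)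
  ultimately show ?case using inv_rem[of \<alpha> 0] by (simp add: field_simps)
next
  case (Suc m)
  define x where "x = cf_rem \<alpha> (Suc m)"
  define y where "y = of_int (cf_a \<alpha> (Suc (Suc m))) + cf_rem \<alpha> (Suc (Suc m))"
  have xpos: "0 < x" using rem_props[OF assms] x_def by blast
  have xy: "x * y = 1" using inv_rem[of \<alpha> "Suc m"] xpos unfolding x_def y_def
    by (simp add: field_simps)
  have IH: "\<alpha> * (cf_q \<alpha> (Suc m) + cf_q \<alpha> m * x) = cf_p \<alpha> (Suc m) + cf_p \<alpha> m * x"
    using Suc.IH x_def by simp
  then have "\<alpha> * (cf_q \<alpha> (Suc m) + cf_q \<alpha> m * x) * y = (cf_p \<alpha> (Suc m) + cf_p \<alpha> m * x) * y"
    by simp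
  then have "\<alpha> * (cf_q \<alpha> (Suc m) * y + cf_q \<alpha> m * (x * y)) = cf_p \<alpha> (Suc m) * y + cf_p \<alpha> m * (x * y)"
    by (simp add: algebra_simps)
  then have "\<alpha> * (cf_q \<alpha> (Suc m) * y + cf_q \<alpha> m) = cf_p \<alpha> (Suc m) * y + cf_p \<alpha> m"
    using xy by simp
  then show ?case unfolding y_def by (simp add: algebra_simps)
qed


lemma core:
  fixes p q j J Q :: int and e y :: real
  assumes q0: "q > 0" and qQ: "q \<le> Q" and e0: "0 \<le> e" and eQ: "e * Q < 1"
    and yq: "of_int q * y = of_int (j*p) + of_int J * e"
    and J1: "-q < J" and J2: "J \<le> Q+1"
    and Jneg: "J < 0 \<Longrightarrow> \<not> q dvd (j*p)"
    and Jtop: "J = Q+1 \<Longrightarrow> (j*p) mod q \<noteq> q - 1"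
  shows "\<lfloor>y\<rfloor> = (j*p) div q"
proof -
  define m where "m = (j*p) div q"
  define r where "r = (j*p) mod q"
  have jp: "j*p = q*m + r" unfolding m_def r_def by simp
  have r0: "0 \<le> r" "r < q" unfolding r_def using q0 by auto
  have Q1: "Q \<ge> 1" using q0 qQ by linarith
  have e1: "e < 1"
  proof -
    have "e * 1 \<le> e * Q" using e0 Q1 by (intro mult_left_mono) auto
    then show ?thesis using eQ by simp
  qed
  have lo: "0 \<le> of_int r + of_int J * e"
  proof (cases "J < 0")
    case True
    then have "r \<noteq> 0" using Jneg jp by (metis add.right_neutral dvd_triv_left)
    then have "r \<ge> 1" using r0 by linarith
    have "- J \<le> Q" using J1 qQ by linarith
    then have "of_int (- J) * e \<le> of_int Q * e" using e0 by (intro mult_right_mono) auto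
    then have "- (of_int J * e) < 1" using eQ by (simp add: mult.commute)
    then show ?thesis using \<open>r \<ge> 1\<close> by linarith
  next
    case False
    then show ?thesis using r0 e0 by simp
  qed
  have hi: "of_int r + of_int J * e < of_int q"
  proof (cases "J \<le> 0")
    case True
    then have "of_int J * e \<le> 0" using e0 by (simp add: mult_nonpos_nonneg)
    then show ?thesis using r0 by linarith
  next
    case False
    show ?thesis
    proof (cases "J = Q + 1")
      case True
      then have "r \<noteq> q - 1" using Jtop r_def by simp
      then have "r \<le> q - 2" using r0 by linarith
      have "of_int J * e = of_int Q * e + e" using True by (simp add: algebra_simps)
      then have "of_int J * e < 2" using eQ e1 by (simp add: mult.commute)
      then show ?thesis using \<open>r \<le> q - 2\<close> by linarith
    next
      case False
      then have "J \<le> Q" using J2 by linarith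
      then have "of_int J * e \<le> of_int Q * e" using e0 by (intro mult_right_mono) auto
      then have "of_int J * e < 1" using eQ by (simp add: mult.commute)
      then show ?thesis using r0 by linarith
    qed
  qed
  have "of_int q * y = of_int q * of_int m + (of_int r + of_int J * e)"
    using yq jp by (simp add: algebra_simps)
  then have yeq: "y = of_int m + (of_int r + of_int J * e) / of_int q"
    using q0 by (simp add: field_simps)
  have "(of_int r + of_int J * e) / of_int q < 1" using hi q0 by simp
  moreover have "0 \<le> (of_int r + of_int J * e) / of_int q" using lo q0 by simp
  ultimately show ?thesis unfolding m_def[symmetric] using yeq
    by (intro floor_unique) auto
qed


lemma floor_agree:
  assumes A: "\<alpha> \<in> {0..1}" "\<alpha> \<notin> \<rat>" and n2: "n \<ge> 2"
    and j1: "- cf_q \<alpha> n < (-1)^n * j" and j2: "(-1)^n * j \<le> cf_q \<alpha> (Suc n) + 1"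
  shows "\<lfloor>of_int j * \<alpha>\<rfloor> = \<lfloor>of_int j * cf_approx \<alpha> n\<rfloor>"
proof -
  define p where "p = cf_p \<alpha> n"
  define q where "q = cf_q \<alpha> n"
  define P where "P = cf_p \<alpha> (Suc n)"
  define Q where "Q = cf_q \<alpha> (Suc n)"
  define x where "x = cf_rem \<alpha> (Suc n)"
  define s :: int where "s = (-1)^n"
  have ss: "s * s = 1" unfolding s_def by (simp flip: power_add)
  have D: "P * q - p * Q = s" unfolding P_def q_def p_def Q_def s_def by (rule det)
  have id: "\<alpha> * (Q + q * x) = P + p * x"
    unfolding Q_def q_def x_def P_def p_def using ident[OF A(1,2), of n] by simp
  have q2: "q \<ge> 2" unfolding q_def using q_ge2[OF A(1,2), of "n-2"] n2
    by (metis Suc_diff_Suc add_2_eq_Suc' diff_Suc_1 le_add_diff_inverse2 numeral_2_eq_2)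
  have qQ: "q \<le> Q" unfolding q_def Q_def using q_props[OF A(1,2)] by blast
  have x0: "x > 0" unfolding x_def using rem_props[OF A(1,2)] by blast
  have key: "(of_int q * \<alpha> - of_int p) * (of_int Q + of_int q * x) = of_int s"
  proof -
    have "(of_int q * \<alpha> - of_int p) * (of_int Q + of_int q * x)
        = of_int q * (\<alpha> * (Q + q * x)) - of_int p * (of_int Q + of_int q * x)"
      by (simp add: algebra_simps)
    also have "\<dots> = of_int q * (P + p * x) - of_int p * (of_int Q + of_int q * x)"
      using id by simp
    also have "\<dots> = of_int (P * q - p * Q)" by (simp add: algebra_simps)
    finally show ?thesis using D by simp
  qed
  define e where "e = of_int s * (of_int q * \<alpha> - of_int p)"
  have pos: "of_int Q + of_int q * x > 0" proof -
    have "of_int q * x > 0" using q2 x0 by simp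
    moreover have "of_int Q > (0::real)" using q2 qQ by simp
    ultimately show ?thesis by simp
  qed
  have e1: "e * (of_int Q + of_int q * x) = 1"
    proof -
    have "e * (of_int Q + of_int q * x) = of_int s * of_int s" unfolding e_def using key by (simp add: mult.assoc)
    also have "\<dots> = 1" using ss by (metis of_int_1 of_int_mult)
    finally show ?thesis .
  qed
  have e0: "e > 0" using e1 pos by (smt (verit) mult_nonpos_nonneg)
  have "e * Q < e * (of_int Q + of_int q * x)"
    using e0 q2 x0 by (simp add: mult_pos_pos)
  then have eQ: "e * Q < 1" using e1 by simp
  define J where "J = s * j"
  have jJ: "j = s * J" unfolding J_def using ss by (simp add: mult.assoc[symmetric])
  have yq: "of_int q * (of_int j * \<alpha>) = of_int (j*p) + of_int J * e"
  proof -
    have "of_int J * e = of_int j * (of_int (s*s)) * (of_int q * \<alpha> - of_int p)"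
      unfolding J_def e_def by (simp add: algebra_simps)
    then show ?thesis using ss by (simp add: algebra_simps)
  qed
  have Jneg: "\<not> q dvd (j*p)" if "J < 0"
  proof
    assume h: "q dvd (j*p)"
    then have "q dvd j * (p * Q)" using dvd_mult2[OF h, of Q] by (simp add: mult.assoc)
    have "j * s = j * (P * q - p * Q)" using D by simp
    also have "\<dots> = q * (j * P) - j * (p * Q)" by (simp add: algebra_simps)
    finally have js: "j * s = q * (j * P) - j * (p * Q)" .
    have "q dvd q * (j * P) - j * (p * Q)" using \<open>q dvd j * (p * Q)\<close> by (intro dvd_diff) auto
    then have "q dvd j * s" using js by simp
    then have "q dvd j * s * s" by simp
    then have "q dvd j" using ss by (simp add: mult.assoc)
    moreover have "j \<noteq> 0" using that J_def by auto
    ultimately have "\<bar>q\<bar> \<le> \<bar>j\<bar>" by (simp add: dvd_imp_le_int)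
    moreover have "\<bar>j\<bar> = \<bar>J\<bar>" using jJ s_def by (simp add: abs_mult power_abs)
    moreover have "- q < J" using j1 unfolding J_def s_def q_def by simp
    ultimately show False using that q2 by linarith
  qed
  have Jtop: "(j*p) mod q \<noteq> q - 1" if "J = Q + 1"
  proof
    assume h: "(j*p) mod q = q - 1"
    have "j*p + 1 = q * ((j*p) div q + 1)"
    proof -
      have "j*p = q * ((j*p) div q) + (j*p) mod q" by simp
      then show ?thesis using h by (simp add: algebra_simps)
    qed
    then have d1: "q dvd j*p + 1" by simp
    have "j*p + 1 = s * Q * p + s * p + 1" using jJ that by (simp add: algebra_simps)
    also have "s * Q * p = s * (P * q - s)" using D by (simp add: algebra_simps flip: D)
    finally have "j*p + 1 = q * (s * P) + s * p" using ss by (simp add: algebra_simps)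
    with d1 have "q dvd q * (s * P) + s * p" by simp
    then have "q dvd s * p" by (simp add: dvd_add_right_iff)
    then have "q dvd s * s * p" by (simp add: mult.assoc)
    then have "q dvd p" using ss by simp
    then have "q dvd p * Q" by simp
    have "s = P * q - p * Q" using D by simp
    then have "q dvd s" using \<open>q dvd p * Q\<close> by (simp add: dvd_diff)
    then have "q dvd s * s" by simp
    then have "q dvd 1" using ss by simp
    then show False using q2 by simp
  qed
  have "\<lfloor>of_int j * \<alpha>\<rfloor> = (j*p) div q"
    apply (rule core[OF _ qQ _ eQ yq])
    using q2 e0 j1 j2 Jneg Jtop unfolding J_def s_def Q_def q_def by auto
  moreover have "\<lfloor>of_int j * cf_approx \<alpha> n\<rfloor> = (j*p) div q"
  proof -
    have "of_int j * cf_approx \<alpha> n = of_int (j*p) / of_int q"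
      unfolding cf_approx_def p_def q_def by simp
    then show ?thesis by (simp only: floor_divide_of_int_eq)
  qed
  ultimately show ?thesis by simp
qed


lemma v_floor:
  fixes \<beta> :: real
  assumes "0 \<le> \<beta>" "\<beta> \<le> 1"
  shows "v_seq \<beta> k = of_int (\<lfloor>of_int (k+1) * \<beta>\<rfloor> - \<lfloor>of_int k * \<beta>\<rfloor>)"
proof -
  define t where "t = of_int k * \<beta>"
  define f where "f = frac t"
  have f01: "0 \<le> f" "f < 1" unfolding f_def by (auto simp: frac_lt_1)
  have tf: "t = of_int \<lfloor>t\<rfloor> + f" unfolding f_def by (simp add: frac_def)
  have e: "of_int (k+1) * \<beta> = of_int \<lfloor>t\<rfloor> + (f + \<beta>)" using tf unfolding t_def by (simp add: algebra_simps)
  show ?thesis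
  proof (cases "f + \<beta> \<ge> 1")
    case True
    have "\<lfloor>of_int (k+1) * \<beta>\<rfloor> = \<lfloor>t\<rfloor> + 1" unfolding e using True f01 assms
      by (intro floor_unique) auto
    moreover have "f \<in> {1 - \<beta> ..< 1}" using True f01 by auto
    ultimately show ?thesis unfolding v_seq_def f_def t_def by (simp add: t_def)
  next
    case False
    have "\<lfloor>of_int (k+1) * \<beta>\<rfloor> = \<lfloor>t\<rfloor>" unfolding e using False f01 assms
      by (intro floor_unique) auto
    moreover have "f \<notin> {1 - \<beta> ..< 1}" using False f01 by auto
    ultimately show ?thesis unfolding v_seq_def f_def t_def by (simp add: t_def)
  qed
qed

lemma vt_floor:
  fixes \<beta> :: real
  assumes "0 < \<beta>" "\<beta> \<le> 1"
  shows "vt_seq \<beta> k = of_int (\<lfloor>of_int (-k) * \<beta>\<rfloor> - \<lfloor>of_int (-k-1) * \<beta>\<rfloor>)"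
proof -
  define t where "t = of_int k * \<beta>"
  define f where "f = frac t"
  define m where "m = \<lfloor>t\<rfloor>"
  have f01: "0 \<le> f" "f < 1" unfolding f_def by (auto simp: frac_lt_1)
  have tf: "t = of_int m + f" unfolding f_def m_def by (simp add: frac_def)
  have e1: "of_int (-k) * \<beta> = - of_int m - f" using tf unfolding t_def by (simp add: algebra_simps)
  have e2: "of_int (-k-1) * \<beta> = - of_int m - f - \<beta>" using tf unfolding t_def by (simp add: algebra_simps)
  show ?thesis
  proof (cases "f = 0")
    case True
    have "\<lfloor>of_int (-k) * \<beta>\<rfloor> = - m" unfolding e1 True by simp
    moreover have "\<lfloor>of_int (-k-1) * \<beta>\<rfloor> = - m - 1" unfolding e2 True using assms
      by (intro floor_unique) auto
    moreover have "f \<in> {1 - \<beta> <.. 1} \<union> {0}" using True by auto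
    ultimately show ?thesis unfolding vt_seq_def f_def t_def by (simp add: t_def)
  next
    case False
    then have fp: "f > 0" using f01 by simp
    have A: "\<lfloor>of_int (-k) * \<beta>\<rfloor> = - m - 1" unfolding e1 using fp f01
      by (intro floor_unique) auto
    show ?thesis
    proof (cases "f + \<beta> > 1")
      case True
      have "\<lfloor>of_int (-k-1) * \<beta>\<rfloor> = - m - 2" unfolding e2 using True fp f01 assms
        by (intro floor_unique) auto
      moreover have "f \<in> {1 - \<beta> <.. 1} \<union> {0}" using True f01 by auto
      ultimately show ?thesis using A unfolding vt_seq_def f_def t_def by (simp add: t_def)
    next
      case False
      have "\<lfloor>of_int (-k-1) * \<beta>\<rfloor> = - m - 1" unfolding e2 using False fp f01 assms
        by (intro floor_unique) auto
      moreover have "f \<notin> {1 - \<beta> <.. 1} \<union> {0}" using False fp by auto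
      ultimately show ?thesis using A unfolding vt_seq_def f_def t_def by (simp add: t_def)
    qed
  qed
qed

theorem lemma4p7:
  fixes \<alpha> :: real and n :: nat
  assumes "\<alpha> \<in> {0..1}" and "\<alpha> \<notin> \<rat>" and "n \<ge> 2"
  shows "(if even n
          then (\<forall>k::int. - cf_q \<alpha> n + 1 \<le> k \<and> k \<le> cf_q \<alpha> (n+1) - 2
                   \<longrightarrow> v_seq (cf_approx \<alpha> n) k = v_seq \<alpha> k)
          else (\<forall>k::int. - cf_q \<alpha> (n+1) - 1 \<le> k \<and> k \<le> cf_q \<alpha> n - 2
                   \<longrightarrow> v_seq (cf_approx \<alpha> n) k = v_seq \<alpha> k))
       \<and> (if even n
          then (\<forall>k::int. - cf_q \<alpha> (n+1) - 1 \<le> k \<and> k \<le> cf_q \<alpha> n - 2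
                   \<longrightarrow> vt_seq (cf_approx \<alpha> n) k = vt_seq \<alpha> k)
          else (\<forall>k::int. - cf_q \<alpha> n + 1 \<le> k \<and> k \<le> cf_q \<alpha> (n+1) - 2
                   \<longrightarrow> vt_seq (cf_approx \<alpha> n) k = vt_seq \<alpha> k))"
proof -
  let ?\<beta> = "cf_approx \<alpha> n"
  let ?C = "\<lambda>j::int. - cf_q \<alpha> n < (-1)^n * j \<and> (-1)^n * j \<le> cf_q \<alpha> (Suc n) + 1"
  have FA: "\<lfloor>of_int j * \<alpha>\<rfloor> = \<lfloor>of_int j * ?\<beta>\<rfloor>" if "?C j" for j
    using floor_agree[OF assms] that by blast
  have q2: "cf_q \<alpha> n \<ge> 2" using q_ge2[OF assms(1,2), of "n-2"] assms(3)
    by (metis Suc_diff_Suc add_2_eq_Suc' diff_Suc_1 le_add_diff_inverse2 numeral_2_eq_2)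
  have qQ: "cf_q \<alpha> n \<le> cf_q \<alpha> (Suc n)" using q_props[OF assms(1,2)] by blast
  have sq: "(-1::int)^n = 1 \<or> (-1::int)^n = -1" by (simp add: minus_one_power_iff)
  have a01: "0 < \<alpha>" "\<alpha> < 1"
  proof -
    have "\<alpha> \<noteq> 0" "\<alpha> \<noteq> 1" using assms(2) by auto
    then show "0 < \<alpha>" "\<alpha> < 1" using assms(1) by auto
  qed
  have "?C 1" using sq q2 qQ by auto
  then have "\<lfloor>?\<beta>\<rfloor> = \<lfloor>\<alpha>\<rfloor>" using FA[of 1] by simp
  also have "\<lfloor>\<alpha>\<rfloor> = 0" using a01 by (intro floor_unique) auto
  finally have b1: "?\<beta> < 1" by linarith
  have "?C (-1)" using sq q2 qQ by auto
  then have "\<lfloor>- ?\<beta>\<rfloor> = \<lfloor>- \<alpha>\<rfloor>" using FA[of "-1"] by simp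
  also have "\<lfloor>- \<alpha>\<rfloor> = -1" using a01 by (intro floor_unique) auto
  finally have b0: "?\<beta> > 0" by linarith
  have V: "v_seq ?\<beta> k = v_seq \<alpha> k" if "?C k" "?C (k+1)" for k
    using v_floor[of ?\<beta> k] v_floor[of \<alpha> k] b0 b1 a01 FA[OF that(1)] FA[OF that(2)] by simp
  have VT: "vt_seq ?\<beta> k = vt_seq \<alpha> k" if "?C (-k)" "?C (-k-1)" for k
    using vt_floor[of ?\<beta> k] vt_floor[of \<alpha> k] b0 b1 a01 FA[OF that(1)] FA[OF that(2)] by simp
  show ?thesis
  proof (cases "even n")
    case True
    then have s: "(-1::int)^n = 1" by simp
    show ?thesis using True s q2 qQ by (auto intro!: V VT)
  next
    case False
    then have s: "(-1::int)^n = -1" by simp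
    show ?thesis using False s q2 qQ by (auto intro!: V VT)
  qed
qed

end
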